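(* Let $A$ and $B$ be two $n\times n$ generalized tournament matrices with the same principal minors of orders at most $4$, and let $\alpha>1/2$. Then $A$ is $\alpha$-separable if and only if $B$ is $\alpha$-separable.
   Context: A generalized tournament matrix of order $n$ is a real $n\times n$ matrix $M=(m_{ij})$ with nonnegative entries satisfying $M+M^{t}=J_n-I_n$. Write $[n]=\{1,\ldots,n\}$. For $\alpha>1/2$, $M$ is $\alpha$-separable if there is a partition of $[n]$ into two nonempty sets $X,Y$ such that $m_{xy}=\alpha$ for all $x\in X$, $y\in Y$. *)

theory Defs
  imports "Jordan_Normal_Form.Determinant" "Jordan_Normal_Form.DL_Submatrix"
begin

definition gen_tournament :: "nat \<Rightarrow> real mat \<Rightarrow> bool" where
  "gen_tournament n M \<longleftrightarrow> M \<in> carrier_mat n n \<and>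
     (\<forall>i<n. \<forall>j<n. M $$ (i, j) \<ge> 0) \<and>
     (\<forall>i<n. \<forall>j<n. M $$ (i, j) + M $$ (j, i) = (if i = j then 0 else 1))"

definition alpha_separable :: "nat \<Rightarrow> real \<Rightarrow> real mat \<Rightarrow> bool" where
  "alpha_separable n \<alpha> M \<longleftrightarrow>
     (\<exists>X Y. X \<noteq> {} \<and> Y \<noteq> {} \<and> X \<inter> Y = {} \<and> X \<union> Y = {0..<n} \<and>
        (\<forall>x\<in>X. \<forall>y\<in>Y. M $$ (x, y) = \<alpha>))"

definition principal_minor :: "real mat \<Rightarrow> nat set \<Rightarrow> real" where
  "principal_minor M S = det (submatrix M S S)"

end

theory Submission
  imports Defs
begin

lemma det1: "det (M::real mat) = M$$(0,0)" if "M \<in> carrier_mat 1 1"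
proof -
  have "mat_delete M 0 0 \<in> carrier_mat 0 0" using mat_delete_carrier[OF that] by simp
  then show ?thesis
  using laplace_expansion_column[OF that, of 0] that
  by (simp add: cofactor_def)
qed

lemma md: assumes "M \<in> carrier_mat (Suc m) (Suc m)" "i < Suc m" "a < m" "b < m"
  shows "mat_delete M i 0 $$ (a,b) = M $$ (if a < i then a else Suc a, Suc b)"
  using assms unfolding mat_delete_def insert_index_def by auto

lemma mdc: assumes "M \<in> carrier_mat (Suc m) (Suc m)" shows "mat_delete M i 0 \<in> carrier_mat m m"
  using mat_delete_carrier[OF assms] by simp

lemma det2: "det (M::real mat) = M$$(0,0)*M$$(1,1) - M$$(0,1)*M$$(1,0)" if "M \<in> carrier_mat 2 2"
proof -
  have c: "M \<in> carrier_mat (Suc 1) (Suc 1)" using that by (simp only: Suc_1)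
  have "det M = (\<Sum>i<2. M $$ (i,0) * cofactor M i 0)" using laplace_expansion_column[OF that, of 0] by simp
  also have "\<dots> = M $$ (0,0) * det (mat_delete M 0 0) - M $$ (1,0) * det (mat_delete M 1 0)"
    by (simp add: numeral_2_eq_2 cofactor_def)
  also have "\<dots> = M$$(0,0)*M$$(1,1) - M$$(0,1)*M$$(1,0)"
    using det1[OF mdc[OF c, of 0]] det1[OF mdc[OF c, of 1]] md[OF c, of 0 0 0] md[OF c, of 1 0 0]
    by simp
  finally show ?thesis .
qed

lemma det3: "det (M::real mat) = M$$(0,0)*(M$$(1,1)*M$$(2,2) - M$$(1,2)*M$$(2,1))
   - M$$(1,0)*(M$$(0,1)*M$$(2,2) - M$$(0,2)*M$$(2,1)) + M$$(2,0)*(M$$(0,1)*M$$(1,2) - M$$(0,2)*M$$(1,1))" if "M \<in> carrier_mat 3 3"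
proof -
  have e3: "Suc 2 = (3::nat)" by simp
  have c: "M \<in> carrier_mat (Suc 2) (Suc 2)" using that by (simp only: e3)
  have "det M = (\<Sum>i<3. M $$ (i,0) * cofactor M i 0)" using laplace_expansion_column[OF that, of 0] by simp
  also have "\<dots> = M $$ (0,0) * det (mat_delete M 0 0) - M $$ (1,0) * det (mat_delete M 1 0)
     + M $$ (2,0) * det (mat_delete M 2 0)"
    by (simp add: lessThan_nat_numeral cofactor_def)
  also have "\<dots> = M$$(0,0)*(M$$(1,1)*M$$(2,2) - M$$(1,2)*M$$(2,1))
   - M$$(1,0)*(M$$(0,1)*M$$(2,2) - M$$(0,2)*M$$(2,1)) + M$$(2,0)*(M$$(0,1)*M$$(1,2) - M$$(0,2)*M$$(1,1))"
    using det2[OF mdc[OF c, of 0]] det2[OF mdc[OF c, of 1]] det2[OF mdc[OF c, of 2]]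
      md[OF c, of 0 0 0] md[OF c, of 0 0 1] md[OF c, of 0 1 0] md[OF c, of 0 1 1]
      md[OF c, of 1 0 0] md[OF c, of 1 0 1] md[OF c, of 1 1 0] md[OF c, of 1 1 1]
      md[OF c, of 2 0 0] md[OF c, of 2 0 1] md[OF c, of 2 1 0] md[OF c, of 2 1 1]
    by (simp add: numeral_2_eq_2)
  finally show ?thesis .
qed

lemma pick2: "i < j \<Longrightarrow> pick {i,j} 0 = i \<and> pick {i,j} 1 = j"
proof -
  assume a: "i < j"
  have 0: "pick {i,j} 0 = i" using a by (auto intro!: Least_equality)
  have 1: "pick {i,j} 1 = j" using a 0 by (auto simp: One_nat_def intro!: Least_equality)
  show ?thesis using 0 1 by simp
qed

lemma pick3: "i < j \<Longrightarrow> j < k \<Longrightarrow> pick {i,j,k} 0 = i \<and> pick {i,j,k} 1 = j \<and> pick {i,j,k} 2 = k"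
proof -
  assume a: "i < j" "j < k"
  have 0: "pick {i,j,k} 0 = i" using a by (auto intro!: Least_equality)
  have 1: "pick {i,j,k} 1 = j" using a 0 by (auto simp: One_nat_def intro!: Least_equality)
  have 2: "pick {i,j,k} 2 = k" using a 1 by (auto simp: numeral_2_eq_2 intro!: Least_equality)
  show ?thesis using 0 1 2 by simp
qed

lemma pm2:
  assumes "M \<in> carrier_mat n n" "i < j" "j < n" "\<forall>l<n. M$$(l,l) = 0"
  shows "principal_minor M {i,j} = - M$$(i,j) * M$$(j,i)"
proof -
  have c: "{l. l < n \<and> l \<in> {i,j}} = {i,j}" using assms by auto
  have dr: "dim_row M = n" "dim_col M = n" using assms(1) by auto
  have c2: "card {i,j} = 2" using assms(2) by simp
  have car: "submatrix M {i,j} {i,j} \<in> carrier_mat 2 2"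
    unfolding carrier_mat_def mem_Collect_eq dim_submatrix dr c c2 by simp
  have e: "submatrix M {i,j} {i,j} $$ (a,b) = M $$ (pick {i,j} a, pick {i,j} b)" if "a < 2" "b < 2" for a b
    using submatrix_index[where A=M and I="{i,j}" and J="{i,j}" and i=a and j=b] that
    unfolding dr c c2 by simp
  show ?thesis unfolding principal_minor_def det2[OF car] using e pick2[OF assms(2)] assms by (simp del: pick.simps)
qed

lemma pm3:
  assumes "M \<in> carrier_mat n n" "i < j" "j < k" "k < n" "\<forall>l<n. M$$(l,l) = 0"
  shows "principal_minor M {i,j,k} = M$$(i,j)*M$$(j,k)*M$$(k,i) + M$$(i,k)*M$$(k,j)*M$$(j,i)"
proof -
  have c: "{l. l < n \<and> l \<in> {i,j,k}} = {i,j,k}" using assms by auto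
  have dr: "dim_row M = n" "dim_col M = n" using assms(1) by auto
  have c3: "card {i,j,k} = 3" using assms(2,3) by (simp add: card_insert_if)
  have car: "submatrix M {i,j,k} {i,j,k} \<in> carrier_mat 3 3"
    unfolding carrier_mat_def mem_Collect_eq dim_submatrix dr c c3 by simp
  have e: "submatrix M {i,j,k} {i,j,k} $$ (a,b) = M $$ (pick {i,j,k} a, pick {i,j,k} b)" if "a < 3" "b < 3" for a b
    using submatrix_index[where A=M and I="{i,j,k}" and J="{i,j,k}" and i=a and j=b] that
    unfolding dr c c3 by simp
  note p = pick3[OF assms(2,3)]
  let ?S = "submatrix M {i,j,k} {i,j,k}"
  have d: "M$$(i,i) = 0" "M$$(j,j) = 0" "M$$(k,k) = 0" using assms by auto
  have "?S$$(0,0) = 0" using e[of 0 0] p d by (simp del: pick.simps)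
  moreover have "?S$$(1,1) = 0" using e[of 1 1] p d by (simp del: pick.simps)
  moreover have "?S$$(2,2) = 0" using e[of 2 2] p d by (simp del: pick.simps)
  moreover have "?S$$(0,1) = M$$(i,j)" using e[of 0 1] p by (simp del: pick.simps)
  moreover have "?S$$(0,2) = M$$(i,k)" using e[of 0 2] p by (simp del: pick.simps)
  moreover have "?S$$(1,0) = M$$(j,i)" using e[of 1 0] p by (simp del: pick.simps)
  moreover have "?S$$(1,2) = M$$(j,k)" using e[of 1 2] p by (simp del: pick.simps)
  moreover have "?S$$(2,0) = M$$(k,i)" using e[of 2 0] p by (simp del: pick.simps)
  moreover have "?S$$(2,1) = M$$(k,j)" using e[of 2 1] p by (simp del: pick.simps)
  ultimately show ?thesis unfolding principal_minor_def det3[OF car]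
    by (simp add: algebra_simps)
qed

lemma pm2':
  assumes "M \<in> carrier_mat n n" "i \<noteq> j" "i < n" "j < n" "\<forall>l<n. M$$(l,l) = 0"
  shows "principal_minor M {i,j} = - M$$(i,j) * M$$(j,i)"
proof (cases "i < j")
  case True then show ?thesis using pm2[OF assms(1) True assms(4,5)] by simp
next
  case False then have "j < i" using assms by simp
  moreover have "{i,j} = {j,i}" by auto
  ultimately show ?thesis using pm2[OF assms(1) \<open>j < i\<close> assms(3,5)] by simp
qed

definition cyc :: "real mat \<Rightarrow> nat \<Rightarrow> nat \<Rightarrow> nat \<Rightarrow> real" where
  "cyc M i j k = M$$(i,j)*M$$(j,k)*M$$(k,i) + M$$(i,k)*M$$(k,j)*M$$(j,i)"

lemma pm3':
  assumes "M \<in> carrier_mat n n" "i \<noteq> j" "j \<noteq> k" "i \<noteq> k" "i < n" "j < n" "k < n" "\<forall>l<n. M$$(l,l) = 0"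
  shows "principal_minor M {i,j,k} = cyc M i j k"
proof -
  have s1: "cyc M i j k = cyc M j i k" "cyc M i j k = cyc M i k j" "cyc M i j k = cyc M k j i"
     "cyc M i j k = cyc M j k i" "cyc M i j k = cyc M k i j"
    unfolding cyc_def by (simp_all add: algebra_simps)
  have s2: "{i,j,k} = {j,i,k}" "{i,j,k} = {i,k,j}" "{i,j,k} = {k,j,i}" "{i,j,k} = {j,k,i}" "{i,j,k} = {k,i,j}"
    by auto
  have "i < j \<and> j < k \<or> i < k \<and> k < j \<or> j < i \<and> i < k \<or> j < k \<and> k < i \<or> k < i \<and> i < j \<or> k < j \<and> j < i"
    using assms by linarith
  then show ?thesis
  proof (elim disjE conjE)
    assume a: "i < j" "j < k" show ?thesis using pm3[OF assms(1) a assms(7,8)] by (simp add: cyc_def)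
  next
    assume a: "i < k" "k < j"
    have "principal_minor M {i,k,j} = cyc M i k j" using pm3[OF assms(1) a assms(6,8)] by (simp add: cyc_def)
    then show ?thesis unfolding s1(2) s2(2) .
  next
    assume a: "j < i" "i < k"
    have "principal_minor M {j,i,k} = cyc M j i k" using pm3[OF assms(1) a assms(7,8)] by (simp add: cyc_def)
    then show ?thesis unfolding s1(1) s2(1) .
  next
    assume a: "j < k" "k < i"
    have "principal_minor M {j,k,i} = cyc M j k i" using pm3[OF assms(1) a assms(5,8)] by (simp add: cyc_def)
    then show ?thesis unfolding s1(4) s2(4) .
  next
    assume a: "k < i" "i < j"
    have "principal_minor M {k,i,j} = cyc M k i j" using pm3[OF assms(1) a assms(6,8)] by (simp add: cyc_def)
    then show ?thesis unfolding s1(5) s2(5) .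
  next
    assume a: "k < j" "j < i"
    have "principal_minor M {k,j,i} = cyc M k j i" using pm3[OF assms(1) a assms(5,8)] by (simp add: cyc_def)
    then show ?thesis unfolding s1(3) s2(3) .
  qed
qed

lemma transfer:
  fixes n :: nat and A B :: "real mat" and \<alpha> :: real
  assumes gA: "gen_tournament n A" and gB: "gen_tournament n B"
    and mn: "\<forall>S. S \<subseteq> {0..<n} \<and> S \<noteq> {} \<and> card S \<le> 4 \<longrightarrow>
           principal_minor A S = principal_minor B S"
    and al: "\<alpha> > 1/2"
    and sA: "alpha_separable n \<alpha> A"
  shows "alpha_separable n \<alpha> B"
proof -
  have cA: "A \<in> carrier_mat n n" and sy: "\<forall>i<n. \<forall>j<n. A $$ (i, j) + A $$ (j, i) = (if i = j then 0 else 1)"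
    using gA unfolding gen_tournament_def by auto
  have cB: "B \<in> carrier_mat n n" and syB: "\<forall>i<n. \<forall>j<n. B $$ (i, j) + B $$ (j, i) = (if i = j then 0 else 1)"
    using gB unfolding gen_tournament_def by auto
  have dA: "\<forall>l<n. A$$(l,l) = 0" using sy by force
  have dB: "\<forall>l<n. B$$(l,l) = 0" using syB by force
  have As: "A$$(j,i) = 1 - A$$(i,j)" if "i<n" "j<n" "i\<noteq>j" for i j using sy that by force
  have Bs: "B$$(j,i) = 1 - B$$(i,j)" if "i<n" "j<n" "i\<noteq>j" for i j using syB that by force
  have B2: "B$$(i,j) = A$$(i,j) \<or> B$$(i,j) = 1 - A$$(i,j)" if "i<n" "j<n" "i\<noteq>j" for i j
  proof -
    have "card {i,j} \<le> 4" using that by simp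
    then have "principal_minor A {i,j} = principal_minor B {i,j}" using mn that by auto
    then have e: "A$$(i,j) * (1 - A$$(i,j)) = B$$(i,j) * (1 - B$$(i,j))"
      using pm2'[OF cA that(3,1,2) dA] pm2'[OF cB that(3,1,2) dB] As[OF that] Bs[OF that] by simp
    have "(B$$(i,j) - A$$(i,j)) * (B$$(i,j) - (1 - A$$(i,j))) = 0"
      using e by (simp add: algebra_simps)
    then show ?thesis by auto
  qed
  have B3: "cyc A i j k = cyc B i j k" if "i\<noteq>j" "j\<noteq>k" "i\<noteq>k" "i<n" "j<n" "k<n" for i j k
  proof -
    have "card {i,j,k} \<le> 4" using that by (simp add: card_insert_if)
    then have "principal_minor A {i,j,k} = principal_minor B {i,j,k}" using mn that by auto
    then show ?thesis using pm3'[OF cA that dA] pm3'[OF cB that dB] by simp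
  qed
  obtain X Y where XY: "X \<noteq> {}" "Y \<noteq> {}" "X \<inter> Y = {}" "X \<union> Y = {0..<n}"
     and XYa: "\<forall>x\<in>X. \<forall>y\<in>Y. A $$ (x, y) = \<alpha>"
    using sA unfolding alpha_separable_def by blast
  have Xn: "x < n" if "x \<in> X" for x using XY that by auto
  have Yn: "y < n" if "y \<in> Y" for y using XY that by auto
  have XYd: "x \<noteq> y" if "x \<in> X" "y \<in> Y" for x y using XY that by auto
  have cross: "B$$(y,x) = \<alpha>" if "x \<in> X" "y \<in> Y" "B$$(x,y) \<noteq> \<alpha>" for x y
    using B2[OF Xn[OF that(1)] Yn[OF that(2)] XYd[OF that(1,2)]] XYa that
      Bs[OF Xn[OF that(1)] Yn[OF that(2)] XYd[OF that(1,2)]] by auto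
  have crossA: "A$$(y,x) = 1 - \<alpha>" if "x \<in> X" "y \<in> Y" for x y
    using As[OF Xn[OF that(1)] Yn[OF that(2)] XYd[OF that(1,2)]] XYa that by auto
  have crossB: "B$$(y,x) = 1 - B$$(x,y)" if "x \<in> X" "y \<in> Y" for x y
    using Bs[OF Xn[OF that(1)] Yn[OF that(2)] XYd[OF that(1,2)]] by auto
  have a2: "2*\<alpha> - 1 \<noteq> 0" using al by simp
  have row: "B$$(y',y) = \<alpha>" if "x\<in>X" "y\<in>Y" "y'\<in>Y" "B$$(x,y) = \<alpha>" "B$$(x,y') \<noteq> \<alpha>" for x y y'
  proof -
    have yy: "y \<noteq> y'" using that by auto
    note xy = XYd[OF that(1,2)] and xy' = XYd[OF that(1,3)]
    have b1: "B$$(x,y') = 1 - \<alpha>" using cross[OF that(1,3,5)] crossB[OF that(1,3)] by simp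
    have e: "cyc A x y y' = cyc B x y y'" using B3[OF xy yy xy' Xn[OF that(1)] Yn[OF that(2)] Yn[OF that(3)]] .
    have "cyc A x y y' = \<alpha> * A$$(y,y') * (1 - \<alpha>) + \<alpha> * (1 - A$$(y,y')) * (1 - \<alpha>)"
      unfolding cyc_def using XYa that crossA[OF that(1,2)] crossA[OF that(1,3)]
        As[OF Yn[OF that(2)] Yn[OF that(3)] yy]
      by simp
    also have "\<dots> = \<alpha> * (1 - \<alpha>)" by (simp add: algebra_simps)
    finally have "cyc A x y y' = \<alpha> * (1 - \<alpha>)" .
    moreover have "cyc B x y y' = \<alpha>*B$$(y,y')*\<alpha> + (1-\<alpha>)*(1-B$$(y,y'))*(1-\<alpha>)"
      unfolding cyc_def using that b1 crossB[OF that(1,2)] crossB[OF that(1,3)]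
        Bs[OF Yn[OF that(2)] Yn[OF that(3)] yy]
      by simp
    ultimately have "(2*\<alpha> - 1) * (B$$(y,y') - (1 - \<alpha>)) = 0" using e by (simp add: algebra_simps)
    then have "B$$(y,y') = 1 - \<alpha>" using a2 by simp
    then show ?thesis using Bs[OF Yn[OF that(2)] Yn[OF that(3)] yy] by simp
  qed
  have col: "B$$(x,x') = \<alpha>" if "x\<in>X" "x'\<in>X" "y\<in>Y" "B$$(x,y) = \<alpha>" "B$$(x',y) \<noteq> \<alpha>" for x x' y
  proof -
    have xx: "x \<noteq> x'" using that by auto
    note xy = XYd[OF that(1,3)] and x'y = XYd[OF that(2,3)]
    have b1: "B$$(x',y) = 1 - \<alpha>" using cross[OF that(2,3,5)] crossB[OF that(2,3)] by simp
    have e: "cyc A x y x' = cyc B x y x'" using B3[OF xy x'y[symmetric] xx Xn[OF that(1)] Yn[OF that(3)] Xn[OF that(2)]] .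
    have "cyc A x y x' = \<alpha> * (1 - \<alpha>) * A$$(x',x) + (1 - A$$(x',x)) * \<alpha> * (1 - \<alpha>)"
      unfolding cyc_def using XYa that crossA[OF that(1,3)] crossA[OF that(2,3)]
        As[OF Xn[OF that(1)] Xn[OF that(2)] xx]
      by simp
    also have "\<dots> = \<alpha> * (1 - \<alpha>)" by (simp add: algebra_simps)
    finally have "cyc A x y x' = \<alpha> * (1 - \<alpha>)" .
    moreover have "cyc B x y x' = \<alpha>*\<alpha>*B$$(x',x) + (1-B$$(x',x))*(1-\<alpha>)*(1-\<alpha>)"
      unfolding cyc_def using that b1 crossB[OF that(1,3)] crossB[OF that(2,3)]
        Bs[OF Xn[OF that(1)] Xn[OF that(2)] xx]
      by simp
    ultimately have "(2*\<alpha> - 1) * (B$$(x',x) - (1 - \<alpha>)) = 0" using e by (simp add: algebra_simps)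
    then have "B$$(x',x) = 1 - \<alpha>" using a2 by simp
    then show ?thesis using Bs[OF Xn[OF that(1)] Xn[OF that(2)] xx] by simp
  qed
  show ?thesis
  proof (cases "\<exists>x\<in>X. \<forall>y\<in>Y. B$$(x,y) = \<alpha>")
    case True
    define X' where "X' = {x\<in>X. \<forall>y\<in>Y. B$$(x,y) = \<alpha>}"
    define Y' where "Y' = {0..<n} - X'"
    have "X' \<noteq> {}" using True X'_def by auto
    moreover have "Y \<subseteq> Y'" using XY unfolding X'_def Y'_def by auto
    then have "Y' \<noteq> {}" using XY by auto
    moreover have "X' \<inter> Y' = {}" "X' \<union> Y' = {0..<n}" using XY unfolding X'_def Y'_def by auto
    moreover have "\<forall>u\<in>X'. \<forall>v\<in>Y'. B $$ (u, v) = \<alpha>"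
    proof (intro ballI)
      fix u v assume u: "u \<in> X'" and v: "v \<in> Y'"
      show "B $$ (u, v) = \<alpha>"
      proof (cases "v \<in> Y")
        case True then show ?thesis using u X'_def by auto
      next
        case False
        then have vX: "v \<in> X" "v \<notin> X'" using v XY unfolding Y'_def by auto
        then obtain y where "y \<in> Y" "B$$(v,y) \<noteq> \<alpha>" unfolding X'_def by auto
        then show ?thesis using col[of u v y] u vX unfolding X'_def by auto
      qed
    qed
    ultimately show ?thesis unfolding alpha_separable_def by blast
  next
    case False
    define R where "R x = {y\<in>Y. B$$(x,y) = \<alpha>}" for x
    have fX: "finite X" using XY by (metis finite_Un finite_atLeastLessThan)
    have fY: "finite Y" using XY by (metis finite_Un finite_atLeastLessThan)
    obtain xm where xm: "xm \<in> X" "Max ((\<lambda>x. card (R x)) ` X) = card (R xm)"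
      using obtains_MAX[OF fX XY(1)] by blast
    have mx: "card (R x) \<le> card (R xm)" if "x \<in> X" for x
    proof -
      have "card (R x) \<le> Max ((\<lambda>x. card (R x)) ` X)" by (rule Max_ge) (use fX that in auto)
      then show ?thesis using xm(2) by simp
    qed
    obtain y0 where y0: "y0 \<in> Y" "B$$(xm,y0) \<noteq> \<alpha>" using False xm by auto
    have all0: "B$$(x,y0) \<noteq> \<alpha>" if "x \<in> X" for x
    proof
      assume h: "B$$(x,y0) = \<alpha>"
      have "R xm \<subseteq> R x"
      proof
        fix y assume "y \<in> R xm"
        then have y: "y \<in> Y" "B$$(xm,y) = \<alpha>" unfolding R_def by auto
        show "y \<in> R x"
        proof (rule ccontr)
          assume "y \<notin> R x"
          then have "B$$(x,y) \<noteq> \<alpha>" using y R_def by auto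
          then have 1: "B$$(y,y0) = \<alpha>" using row[OF that y0(1) y(1) h] by simp
          have 2: "B$$(y0,y) = \<alpha>" using row[OF xm(1) y(1) y0(1) y(2) y0(2)] .
          have "y \<noteq> y0" using y y0 by auto
          then show False using Bs[OF Yn[OF y(1)] Yn[OF y0(1)]] 1 2 al by simp
        qed
      qed
      moreover have "y0 \<in> R x" "y0 \<notin> R xm" using h y0 R_def by auto
      ultimately have "R xm \<subset> R x" by auto
      moreover have "finite (R x)" using fY R_def by auto
      ultimately have "card (R xm) < card (R x)" by (rule psubset_card_mono[rotated])
      then show False using mx[OF that] by simp
    qed
    define X' where "X' = {y\<in>Y. \<forall>x\<in>X. B$$(x,y) \<noteq> \<alpha>}"
    define Y' where "Y' = {0..<n} - X'"
    have "X' \<noteq> {}" using y0 all0 X'_def by auto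
    moreover have "X \<subseteq> Y'" using XY unfolding X'_def Y'_def by auto
    then have "Y' \<noteq> {}" using XY by auto
    moreover have "X' \<inter> Y' = {}" "X' \<union> Y' = {0..<n}" using XY unfolding X'_def Y'_def by auto
    moreover have "\<forall>u\<in>X'. \<forall>v\<in>Y'. B $$ (u, v) = \<alpha>"
    proof (intro ballI)
      fix u v assume u: "u \<in> X'" and v: "v \<in> Y'"
      show "B $$ (u, v) = \<alpha>"
      proof (cases "v \<in> X")
        case True then show ?thesis using u X'_def cross by auto
      next
        case False
        then have vY: "v \<in> Y" "v \<notin> X'" using v XY unfolding Y'_def by auto
        then obtain x where "x \<in> X" "B$$(x,v) = \<alpha>" unfolding X'_def by auto
        then show ?thesis using row[of x v u] u vY unfolding X'_def by auto
      qed
    qed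
    ultimately show ?thesis unfolding alpha_separable_def by blast
  qed
qed

theorem corollary5p6:
  fixes n :: nat and A B :: "real mat" and \<alpha> :: real
  assumes "gen_tournament n A" and "gen_tournament n B"
    and "\<forall>S. S \<subseteq> {0..<n} \<and> S \<noteq> {} \<and> card S \<le> 4 \<longrightarrow>
           principal_minor A S = principal_minor B S"
    and "\<alpha> > 1/2"
  shows "alpha_separable n \<alpha> A \<longleftrightarrow> alpha_separable n \<alpha> B"
proof -
  have m2: "\<forall>S. S \<subseteq> {0..<n} \<and> S \<noteq> {} \<and> card S \<le> 4 \<longrightarrow>
           principal_minor B S = principal_minor A S" using assms(3) by simp
  show ?thesis using transfer[OF assms(1,2,3,4)] transfer[OF assms(2,1) m2 assms(4)] by blast
qed

end
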